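(* Let $x_0\in\mathbb{R}\cup\{+\infty\}$, $T<x_0$, $I:=[T,x_0)$, and let $\phi_1,\phi_2\in AC^1(I)$ satisfy $\phi_2(x)=o(\phi_1(x))$ as $x\to x_0$, $\phi_1(x)\neq0$, $\phi_2(x)\neq0$ and $W(x):=W(\phi_1,\phi_2;x)\neq0$ for all $x\in I$. Let $\phi\in\mathrm{span}(\phi_1,\phi_2)$ be strictly positive on a left-sided neighborhood $J\subset I$ of $x_0$, and consider the factorization $$L[u]=\frac{W(x)}{\phi(x)}\Big[\frac{\phi(x)^2}{W(x)}\Big(\frac{u}{\phi(x)}\Big)'\Big]'\quad\text{on }J.$$ This factorization is canonical of type (I) at $x_0$ (i.e. $\int^{x_0}W(t)\phi(t)^{-2}\,dt$ diverges) if and only if $\phi(x)\sim c\,\phi_2(x)$ as $x\to x_0$ for some constant $c\neq0$; and it is canonical of type (II) at $x_0$ (i.e. $\int^{x_0}W(t)\phi(t)^{-2}\,dt$ converges) if and only if $\phi(x)\sim c\,\phi_1(x)$ as $x\to x_0$ for some constant $c\neq0$. Moreover $\phi(x)\sim c\,\phi_2(x)$ as $x\to x_0$ occurs if and only if $\phi\equiv c\,\phi_2$ on $I$; hence on a fixed left-sided neighborhood of $x_0$ there is, up to constant factors, only one canonical factorization of type (I) at $x_0$.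
   Context: $AC^1(I)$: $C^1$ functions on $I$ whose derivative is absolutely continuous on every compact subinterval of $I$. $W(g,h;x):=g(x)h'(x)-g'(x)h(x)$. $L$ is the unique operator $L[u]=u''+a_1(x)u'+a_2(x)u$ with locally integrable coefficients whose kernel is $\mathrm{span}(\phi_1,\phi_2)$. A factorization $L[u]=p_2[p_1(p_0u)']'$ with nowhere-vanishing $p_i$ is called canonical of type (I), resp. type (II), at $x_0$ according as $\int^{x_0}1/p_1$ diverges, resp. converges; in the displayed factorization $p_1=\phi^2/W$. Limits are as $x\to x_0^-$. *)

theory Defs
  imports "HOL-Analysis.Analysis" "HOL-Library.Landau_Symbols"
begin

definition abs_cont_on :: "real set \<Rightarrow> (real \<Rightarrow> real) \<Rightarrow> bool" where
  "abs_cont_on S f \<longleftrightarrow>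
     (\<forall>\<epsilon>>0. \<exists>\<delta>>0. \<forall>(n::nat) (a::nat\<Rightarrow>real) (b::nat\<Rightarrow>real).
        (\<forall>i<n. a i \<le> b i \<and> {a i..b i} \<subseteq> S) \<and>
        (\<forall>i<n. \<forall>j<n. i \<noteq> j \<longrightarrow> {a i<..<b i} \<inter> {a j<..<b j} = {}) \<and>
        (\<Sum>i<n. b i - a i) < \<delta>
        \<longrightarrow> (\<Sum>i<n. \<bar>f (b i) - f (a i)\<bar>) < \<epsilon>)"

definition AC1_on :: "real set \<Rightarrow> (real \<Rightarrow> real) \<Rightarrow> (real \<Rightarrow> real) \<Rightarrow> bool" where
  "AC1_on I f f' \<longleftrightarrow>
     (\<forall>x\<in>I. (f has_real_derivative f' x) (at x within I)) \<and>
     continuous_on I f' \<and>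
     (\<forall>a b. {a..b} \<subseteq> I \<longrightarrow> abs_cont_on {a..b} f')"

definition wronskian :: "(real \<Rightarrow> real) \<Rightarrow> (real \<Rightarrow> real) \<Rightarrow> (real \<Rightarrow> real) \<Rightarrow> (real \<Rightarrow> real) \<Rightarrow> real \<Rightarrow> real" where
  "wronskian g g' h h' x = g x * h' x - g' x * h x"

definition left_filter :: "ereal \<Rightarrow> real filter" where
  "left_filter x0 = (if x0 = PInfty then at_top else at_left (real_of_ereal x0))"

definition improper_conv :: "(real \<Rightarrow> real) \<Rightarrow> real \<Rightarrow> ereal \<Rightarrow> bool" where
  "improper_conv f S x0 \<longleftrightarrow>
     (\<exists>l. ((\<lambda>x. integral {S..x} f) \<longlongrightarrow> l) (left_filter x0))"

(* canonical factorization type at x0, in terms of the middle coefficient p1 *)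
definition canonical_type_I :: "(real \<Rightarrow> real) \<Rightarrow> real \<Rightarrow> ereal \<Rightarrow> bool" where
  "canonical_type_I p1 S x0 \<longleftrightarrow> \<not> improper_conv (\<lambda>t. 1 / p1 t) S x0"

definition canonical_type_II :: "(real \<Rightarrow> real) \<Rightarrow> real \<Rightarrow> ereal \<Rightarrow> bool" where
  "canonical_type_II p1 S x0 \<longleftrightarrow> improper_conv (\<lambda>t. 1 / p1 t) S x0"

end

theory Submission
  imports Defs
begin

lemma lf_nontriv: "ereal T < x0 \<Longrightarrow> left_filter x0 \<noteq> bot"
  by (cases x0) (auto simp: left_filter_def)

lemma lf_ev: "ereal S < x0 \<Longrightarrow> eventually (\<lambda>x. S \<le> x \<and> ereal x < x0) (left_filter x0)"
proof (cases x0)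
  case (real r)
  assume "ereal S < x0"
  then have "S < r" using real by simp
  then have "eventually (\<lambda>x. x \<in> {S<..<r}) (at_left r)" by (rule eventually_at_left_real)
  then show ?thesis using real by (auto simp: left_filter_def elim!: eventually_mono)
next
  case PInf
  then show ?thesis by (auto simp: left_filter_def intro: eventually_ge_at_top)
next
  case MInf
  assume "ereal S < x0" then show ?thesis using MInf by simp
qed

lemma ftc_aux:
  fixes g f :: "real \<Rightarrow> real"
  assumes "S \<le> y" "\<forall>t\<in>{S..y}. (g has_real_derivative f t) (at t within {S..y})"
  shows "integral {S..y} f = g y - g S"
proof -
  have "(f has_integral g y - g S) {S..y}"
    using assms by (intro fundamental_theorem_of_calculus)
      (auto simp: has_real_derivative_iff_has_vector_derivative)
  then show ?thesis by (rule integral_unique)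
qed

lemma deriv_eq: "(f has_field_derivative d) F \<Longrightarrow> d = e \<Longrightarrow> (f has_field_derivative e) F"
  by simp


lemma char:
  fixes x0 :: ereal and T S :: real
    and \<phi>1 \<phi>1' \<phi>2 \<phi>2' :: "real \<Rightarrow> real" and a b :: real
  defines "I \<equiv> {x. T \<le> x \<and> ereal x < x0}"
    and "J \<equiv> {x. S \<le> x \<and> ereal x < x0}"
    and "W \<equiv> wronskian \<phi>1 \<phi>1' \<phi>2 \<phi>2'"
    and "\<phi> \<equiv> (\<lambda>x. a * \<phi>1 x + b * \<phi>2 x)"
  assumes T_lt: "ereal T < x0"
    and ac1: "AC1_on I \<phi>1 \<phi>1'" and ac2: "AC1_on I \<phi>2 \<phi>2'"
    and small: "\<phi>2 \<in> o[left_filter x0](\<phi>1)"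
    and nz1: "\<forall>x\<in>I. \<phi>1 x \<noteq> 0" and nz2: "\<forall>x\<in>I. \<phi>2 x \<noteq> 0"
    and S_ge: "T \<le> S" and S_lt: "ereal S < x0"
    and pos: "\<forall>x\<in>J. \<phi> x > 0"
  shows "improper_conv (\<lambda>t. 1 / (\<phi> t ^ 2 / W t)) S x0 \<longleftrightarrow> a \<noteq> 0"
proof -
  define F where "F = left_filter x0"
  define f where "f = (\<lambda>t. 1 / (\<phi> t ^ 2 / W t))"
  have Fnb: "F \<noteq> bot" using lf_nontriv[OF T_lt] by (simp add: F_def)
  have evJ: "eventually (\<lambda>x. x \<in> J) F" using lf_ev[OF S_lt] by (simp add: F_def J_def)
  have JI: "J \<subseteq> I" using S_ge by (auto simp: I_def J_def)
  have SJ: "S \<in> J" using S_lt by (simp add: J_def)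
  have r0: "((\<lambda>x. \<phi>2 x / \<phi>1 x) \<longlongrightarrow> 0) F" using smalloD_tendsto[OF small] by (simp add: F_def)
  have d1: "(\<phi>1 has_real_derivative \<phi>1' t) (at t within {S..y})" and
       d2: "(\<phi>2 has_real_derivative \<phi>2' t) (at t within {S..y})"
    if "y \<in> J" "t \<in> {S..y}" for t y
  proof -
    have sub: "{S..y} \<subseteq> I" using that S_ge by (auto simp: I_def J_def) (meson ereal_less_eq(3) order_le_less_trans)
    have tI: "t \<in> I" using that sub by auto
    show "(\<phi>1 has_real_derivative \<phi>1' t) (at t within {S..y})"
      using ac1 tI sub unfolding AC1_on_def by (meson has_field_derivative_subset)
    show "(\<phi>2 has_real_derivative \<phi>2' t) (at t within {S..y})"
      using ac2 tI sub unfolding AC1_on_def by (meson has_field_derivative_subset)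
  qed
  have dphi: "(\<phi> has_real_derivative a * \<phi>1' t + b * \<phi>2' t) (at t within {S..y})"
    if "y \<in> J" "t \<in> {S..y}" for t y
    unfolding \<phi>_def using d1[OF that] d2[OF that] by (auto intro!: derivative_eq_intros)
  have phinz: "\<phi> t \<noteq> 0" if "y \<in> J" "t \<in> {S..y}" for t y
  proof -
    have e: "ereal t \<le> ereal y" using that by simp
    have "ereal y < x0" using that by (simp add: J_def)
    then have "ereal t < x0" using le_less_trans[OF e] by blast
    then have "t \<in> J" using that by (simp add: J_def)
    then show ?thesis using pos by fastforce
  qed
  show ?thesis
  proof (cases "a = 0")
    case False
    define G where "G = (\<lambda>t. \<phi>2 t / \<phi> t / a)"
    have intG: "integral {S..y} f = G y - G S" if "y \<in> J" for y
    proof (rule ftc_aux)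
      show "S \<le> y" using that by (simp add: J_def)
      show "\<forall>t\<in>{S..y}. (G has_real_derivative f t) (at t within {S..y})"
      proof
        fix t assume t: "t \<in> {S..y}"
        have num: "\<phi>2' t * \<phi> t - (a * \<phi>1' t + b * \<phi>2' t) * \<phi>2 t = a * W t"
          by (simp add: \<phi>_def W_def wronskian_def algebra_simps)
        show "(G has_real_derivative f t) (at t within {S..y})"
          unfolding G_def
          apply (rule deriv_eq)
           apply (rule DERIV_cdivide[OF DERIV_quotient[OF d2[OF that t] dphi[OF that t] phinz[OF that t]]])
          using False
          by (simp add: f_def num power2_eq_square)
      qed
    qed
    have G0: "((\<lambda>x. G x) \<longlongrightarrow> 0) F"
    proof -
      have "((\<lambda>x. (\<phi>2 x / \<phi>1 x) / (a + b * (\<phi>2 x / \<phi>1 x)) / a) \<longlongrightarrow> 0 / (a + b * 0) / a) F"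
        using False by (intro tendsto_intros r0) auto
      moreover have "eventually (\<lambda>x. (\<phi>2 x / \<phi>1 x) / (a + b * (\<phi>2 x / \<phi>1 x)) / a = G x) F"
        using evJ
      proof (rule eventually_mono)
        fix x assume "x \<in> J"
        then have "\<phi>1 x \<noteq> 0" using nz1 JI by auto
        then show "(\<phi>2 x / \<phi>1 x) / (a + b * (\<phi>2 x / \<phi>1 x)) / a = G x"
          by (simp add: G_def \<phi>_def field_simps)
      qed
      ultimately show ?thesis by (simp add: tendsto_cong)
    qed
    have "((\<lambda>x. integral {S..x} f) \<longlongrightarrow> 0 - G S) F"
    proof -
      have "((\<lambda>x. G x - G S) \<longlongrightarrow> 0 - G S) F" by (intro tendsto_intros G0)
      moreover have "eventually (\<lambda>x. G x - G S = integral {S..x} f) F"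
        using evJ by (rule eventually_mono) (simp add: intG)
      ultimately show ?thesis by (simp add: tendsto_cong)
    qed
    then show ?thesis using False unfolding improper_conv_def F_def f_def by blast
  next
    case True
    have bnz: "b \<noteq> 0" using pos SJ True by (auto simp: \<phi>_def)
    define H where "H = (\<lambda>t. - (\<phi>1 t / \<phi> t / b))"
    have intH: "integral {S..y} f = H y - H S" if "y \<in> J" for y
    proof (rule ftc_aux)
      show "S \<le> y" using that by (simp add: J_def)
      show "\<forall>t\<in>{S..y}. (H has_real_derivative f t) (at t within {S..y})"
      proof
        fix t assume t: "t \<in> {S..y}"
        have num: "\<phi>1' t * \<phi> t - (a * \<phi>1' t + b * \<phi>2' t) * \<phi>1 t = - b * W t"
          by (simp add: \<phi>_def W_def wronskian_def algebra_simps)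
        show "(H has_real_derivative f t) (at t within {S..y})"
          unfolding H_def
          apply (rule deriv_eq)
           apply (rule DERIV_minus[OF DERIV_cdivide[OF DERIV_quotient[OF d1[OF that t] dphi[OF that t] phinz[OF that t]]]])
          using bnz
          by (simp add: f_def num power2_eq_square)
      qed
    qed
    have "\<not> improper_conv f S x0"
    proof
      assume "improper_conv f S x0"
      then obtain l where l: "((\<lambda>x. integral {S..x} f) \<longlongrightarrow> l) F"
        unfolding improper_conv_def F_def by blast
      have "eventually (\<lambda>x. integral {S..x} f = H x - H S) F"
        using evJ by (rule eventually_mono) (simp add: intH)
      then have "((\<lambda>x. H x - H S) \<longlongrightarrow> l) F" using l by (simp add: tendsto_cong)
      then have "((\<lambda>x. (H x - H S) + H S) \<longlongrightarrow> l + H S) F" by (intro tendsto_intros)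
      then have "((\<lambda>x. - b * b * H x) \<longlongrightarrow> - b * b * (l + H S)) F" by (intro tendsto_intros) simp
      moreover have "eventually (\<lambda>x. - b * b * H x = \<phi>1 x / \<phi>2 x) F"
        using evJ
      proof (rule eventually_mono)
        fix x assume "x \<in> J"
        then have "\<phi>2 x \<noteq> 0" using nz2 JI by auto
        then show "- b * b * H x = \<phi>1 x / \<phi>2 x"
          using bnz True by (simp add: H_def \<phi>_def field_simps)
      qed
      ultimately have q: "((\<lambda>x. \<phi>1 x / \<phi>2 x) \<longlongrightarrow> - b * b * (l + H S)) F" by (simp add: tendsto_cong)
      have "((\<lambda>x. (\<phi>2 x / \<phi>1 x) * (\<phi>1 x / \<phi>2 x)) \<longlongrightarrow> 0 * (- b * b * (l + H S))) F"
        by (intro tendsto_intros r0 q)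
      moreover have "eventually (\<lambda>x. (\<phi>2 x / \<phi>1 x) * (\<phi>1 x / \<phi>2 x) = 1) F"
        using evJ
      proof (rule eventually_mono)
        fix x assume "x \<in> J"
        then have "\<phi>2 x \<noteq> 0" "\<phi>1 x \<noteq> 0" using nz1 nz2 JI by auto
        then show "(\<phi>2 x / \<phi>1 x) * (\<phi>1 x / \<phi>2 x) = 1" by simp
      qed
      ultimately have "((\<lambda>x. 1::real) \<longlongrightarrow> 0 * (- b * b * (l + H S))) F" by (rule Lim_transform_eventually)
      then show False using tendsto_const_iff[of F "1::real"] Fnb by simp
    qed
    then show ?thesis using True by (simp add: f_def)
  qed
qed


theorem lemma3p2:
  fixes x0 :: ereal and T S :: real
    and \<phi>1 \<phi>1' \<phi>2 \<phi>2' :: "real \<Rightarrow> real" and a b :: real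
  defines "I \<equiv> {x. T \<le> x \<and> ereal x < x0}"
    and "J \<equiv> {x. S \<le> x \<and> ereal x < x0}"
    and "W \<equiv> wronskian \<phi>1 \<phi>1' \<phi>2 \<phi>2'"
    and "\<phi> \<equiv> (\<lambda>x. a * \<phi>1 x + b * \<phi>2 x)"
  assumes T_lt: "ereal T < x0"
    and ac1: "AC1_on I \<phi>1 \<phi>1'" and ac2: "AC1_on I \<phi>2 \<phi>2'"
    and small: "\<phi>2 \<in> o[left_filter x0](\<phi>1)"
    and nz1: "\<forall>x\<in>I. \<phi>1 x \<noteq> 0" and nz2: "\<forall>x\<in>I. \<phi>2 x \<noteq> 0"
    and nzW: "\<forall>x\<in>I. W x \<noteq> 0"
    and S_ge: "T \<le> S" and S_lt: "ereal S < x0"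
    and pos: "\<forall>x\<in>J. \<phi> x > 0"
  shows "(canonical_type_I (\<lambda>x. \<phi> x ^ 2 / W x) S x0 \<longleftrightarrow>
            (\<exists>c. c \<noteq> 0 \<and> \<phi> \<sim>[left_filter x0] (\<lambda>x. c * \<phi>2 x)))
       \<and> (canonical_type_II (\<lambda>x. \<phi> x ^ 2 / W x) S x0 \<longleftrightarrow>
            (\<exists>c. c \<noteq> 0 \<and> \<phi> \<sim>[left_filter x0] (\<lambda>x. c * \<phi>1 x)))
       \<and> (\<forall>c. c \<noteq> 0 \<longrightarrow>
            (\<phi> \<sim>[left_filter x0] (\<lambda>x. c * \<phi>2 x) \<longleftrightarrow> (\<forall>x\<in>I. \<phi> x = c * \<phi>2 x)))
       \<and> (\<forall>a' b'. (\<forall>x\<in>J. a' * \<phi>1 x + b' * \<phi>2 x > 0)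
            \<longrightarrow> canonical_type_I (\<lambda>x. \<phi> x ^ 2 / W x) S x0
            \<longrightarrow> canonical_type_I (\<lambda>x. (a' * \<phi>1 x + b' * \<phi>2 x) ^ 2 / W x) S x0
            \<longrightarrow> (\<exists>k. k \<noteq> 0 \<and> (\<forall>x\<in>J. a' * \<phi>1 x + b' * \<phi>2 x = k * \<phi> x)))"
proof -
  define F where "F = left_filter x0"
  have Fnb: "F \<noteq> bot" using lf_nontriv[OF T_lt] by (simp add: F_def)
  have evJ: "eventually (\<lambda>x. x \<in> J) F" using lf_ev[OF S_lt] by (simp add: F_def J_def)
  have JI: "J \<subseteq> I" using S_ge by (auto simp: I_def J_def)
  have SJ: "S \<in> J" using S_lt by (simp add: J_def)
  have evI: "eventually (\<lambda>x. x \<in> I) F" using evJ JI by (auto elim: eventually_mono)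
  have r0: "((\<lambda>x. \<phi>2 x / \<phi>1 x) \<longlongrightarrow> 0) F" using smalloD_tendsto[OF small] by (simp add: F_def)
  have charA: "improper_conv (\<lambda>t. 1 / (\<phi> t ^ 2 / W t)) S x0 \<longleftrightarrow> a \<noteq> 0"
    unfolding I_def J_def W_def \<phi>_def
    by (rule char) (use assms in \<open>auto simp: I_def J_def \<phi>_def\<close>)
  have bnz: "a = 0 \<Longrightarrow> b \<noteq> 0" using pos SJ by (auto simp: \<phi>_def)
  have factA: "a = 0 \<and> b = c" if c: "c \<noteq> 0" and eq: "\<phi> \<sim>[F] (\<lambda>x. c * \<phi>2 x)" for c
  proof -
    have q: "((\<lambda>x. \<phi> x / (c * \<phi>2 x)) \<longlongrightarrow> 1) F"
      by (rule asymp_equivD_strong[OF eq]) (use evI nz2 c in \<open>auto elim!: eventually_mono\<close>)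
    have a0: "a = 0"
    proof -
      have l1: "((\<lambda>x. \<phi> x / (c * \<phi>2 x) * (\<phi>2 x / \<phi>1 x)) \<longlongrightarrow> 1 * 0) F"
        by (intro tendsto_intros q r0)
      have l2: "((\<lambda>x. (a + b * (\<phi>2 x / \<phi>1 x)) / c) \<longlongrightarrow> (a + b * 0) / c) F"
        using c by (intro tendsto_intros r0)
      have "eventually (\<lambda>x. (a + b * (\<phi>2 x / \<phi>1 x)) / c = \<phi> x / (c * \<phi>2 x) * (\<phi>2 x / \<phi>1 x)) F"
        using evI
      proof (rule eventually_mono)
        fix x assume "x \<in> I"
        then have "\<phi>1 x \<noteq> 0" "\<phi>2 x \<noteq> 0" using nz1 nz2 by auto
        then show "(a + b * (\<phi>2 x / \<phi>1 x)) / c = \<phi> x / (c * \<phi>2 x) * (\<phi>2 x / \<phi>1 x)"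
          using c by (simp add: \<phi>_def field_simps)
      qed
      from Lim_transform_eventually[OF l2 this] have "((\<lambda>x. \<phi> x / (c * \<phi>2 x) * (\<phi>2 x / \<phi>1 x)) \<longlongrightarrow> (a + b * 0) / c) F" .
      from tendsto_unique[OF Fnb this l1] show ?thesis using c by simp
    qed
    have "eventually (\<lambda>x. \<phi> x / (c * \<phi>2 x) = b / c) F"
      using evI
    proof (rule eventually_mono)
      fix x assume "x \<in> I"
      then have "\<phi>2 x \<noteq> 0" using nz2 by auto
      then show "\<phi> x / (c * \<phi>2 x) = b / c" using a0 c by (simp add: \<phi>_def field_simps)
    qed
    from Lim_transform_eventually[OF q this] have "((\<lambda>x. b / c) \<longlongrightarrow> 1) F" .
    then have "b / c = 1" using tendsto_const_iff[of F "b / c" 1] Fnb by simp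
    then show ?thesis using a0 c by simp
  qed
  have factB: "\<phi> \<sim>[F] (\<lambda>x. a * \<phi>1 x)" if a: "a \<noteq> 0"
  proof (rule asymp_equivI')
    have l: "((\<lambda>x. (a + b * (\<phi>2 x / \<phi>1 x)) / a) \<longlongrightarrow> (a + b * 0) / a) F"
      using a by (intro tendsto_intros r0)
    have "eventually (\<lambda>x. (a + b * (\<phi>2 x / \<phi>1 x)) / a = \<phi> x / (a * \<phi>1 x)) F"
      using evI
    proof (rule eventually_mono)
      fix x assume "x \<in> I"
      then have "\<phi>1 x \<noteq> 0" using nz1 by auto
      then show "(a + b * (\<phi>2 x / \<phi>1 x)) / a = \<phi> x / (a * \<phi>1 x)"
        using a by (simp add: \<phi>_def field_simps)
    qed
    from Lim_transform_eventually[OF l this] show "((\<lambda>x. \<phi> x / (a * \<phi>1 x)) \<longlongrightarrow> 1) F"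
      using a by simp
  qed
  have factC: "a \<noteq> 0" if c: "c \<noteq> 0" and eq: "\<phi> \<sim>[F] (\<lambda>x. c * \<phi>1 x)" for c
  proof
    assume a0: "a = 0"
    have q: "((\<lambda>x. \<phi> x / (c * \<phi>1 x)) \<longlongrightarrow> 1) F"
      by (rule asymp_equivD_strong[OF eq]) (use evI nz1 c in \<open>auto elim!: eventually_mono\<close>)
    have l: "((\<lambda>x. b / c * (\<phi>2 x / \<phi>1 x)) \<longlongrightarrow> b / c * 0) F"
      by (intro tendsto_intros r0)
    have "eventually (\<lambda>x. b / c * (\<phi>2 x / \<phi>1 x) = \<phi> x / (c * \<phi>1 x)) F"
      using evI
    proof (rule eventually_mono)
      fix x assume "x \<in> I"
      then have "\<phi>1 x \<noteq> 0" using nz1 by auto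
      then show "b / c * (\<phi>2 x / \<phi>1 x) = \<phi> x / (c * \<phi>1 x)"
        using a0 c by (simp add: \<phi>_def field_simps)
    qed
    from Lim_transform_eventually[OF l this] have "((\<lambda>x. \<phi> x / (c * \<phi>1 x)) \<longlongrightarrow> b / c * 0) F" .
    from tendsto_unique[OF Fnb this q] show False by simp
  qed
  have c1: "canonical_type_I (\<lambda>x. \<phi> x ^ 2 / W x) S x0 \<longleftrightarrow>
            (\<exists>c. c \<noteq> 0 \<and> \<phi> \<sim>[left_filter x0] (\<lambda>x. c * \<phi>2 x))"
  proof
    assume "canonical_type_I (\<lambda>x. \<phi> x ^ 2 / W x) S x0"
    then have a0: "a = 0" using charA by (simp add: canonical_type_I_def)
    have "\<phi> = (\<lambda>x. b * \<phi>2 x)" using a0 by (simp add: \<phi>_def)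
    then show "\<exists>c. c \<noteq> 0 \<and> \<phi> \<sim>[left_filter x0] (\<lambda>x. c * \<phi>2 x)"
      using bnz[OF a0] by (intro exI[of _ b]) simp
  next
    assume "\<exists>c. c \<noteq> 0 \<and> \<phi> \<sim>[left_filter x0] (\<lambda>x. c * \<phi>2 x)"
    then have "a = 0" using factA by (auto simp: F_def)
    then show "canonical_type_I (\<lambda>x. \<phi> x ^ 2 / W x) S x0" using charA by (simp add: canonical_type_I_def)
  qed
  have c2: "canonical_type_II (\<lambda>x. \<phi> x ^ 2 / W x) S x0 \<longleftrightarrow>
            (\<exists>c. c \<noteq> 0 \<and> \<phi> \<sim>[left_filter x0] (\<lambda>x. c * \<phi>1 x))"
  proof
    assume "canonical_type_II (\<lambda>x. \<phi> x ^ 2 / W x) S x0"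
    then have a0: "a \<noteq> 0" using charA by (simp add: canonical_type_II_def)
    then show "\<exists>c. c \<noteq> 0 \<and> \<phi> \<sim>[left_filter x0] (\<lambda>x. c * \<phi>1 x)"
      using factB[OF a0] by (intro exI[of _ a]) (simp add: F_def)
  next
    assume "\<exists>c. c \<noteq> 0 \<and> \<phi> \<sim>[left_filter x0] (\<lambda>x. c * \<phi>1 x)"
    then have "a \<noteq> 0" using factC by (auto simp: F_def)
    then show "canonical_type_II (\<lambda>x. \<phi> x ^ 2 / W x) S x0" using charA by (simp add: canonical_type_II_def)
  qed
  have c3: "\<forall>c. c \<noteq> 0 \<longrightarrow>
            (\<phi> \<sim>[left_filter x0] (\<lambda>x. c * \<phi>2 x) \<longleftrightarrow> (\<forall>x\<in>I. \<phi> x = c * \<phi>2 x))"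
  proof (intro allI impI iffI)
    fix c :: real assume c: "c \<noteq> 0" and "\<phi> \<sim>[left_filter x0] (\<lambda>x. c * \<phi>2 x)"
    then have "a = 0 \<and> b = c" using factA by (simp add: F_def)
    then show "\<forall>x\<in>I. \<phi> x = c * \<phi>2 x" by (simp add: \<phi>_def)
  next
    fix c :: real assume c: "c \<noteq> 0" and e: "\<forall>x\<in>I. \<phi> x = c * \<phi>2 x"
    show "\<phi> \<sim>[left_filter x0] (\<lambda>x. c * \<phi>2 x)"
    proof (rule asymp_equivI')
      have "eventually (\<lambda>x. 1 = \<phi> x / (c * \<phi>2 x)) F"
        using evI
      proof (rule eventually_mono)
        fix x assume "x \<in> I"
        then show "1 = \<phi> x / (c * \<phi>2 x)" using nz2 e c by simp
      qed
      from Lim_transform_eventually[OF tendsto_const this]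
      show "((\<lambda>x. \<phi> x / (c * \<phi>2 x)) \<longlongrightarrow> 1) (left_filter x0)" by (simp add: F_def)
    qed
  qed
  have c4: "\<forall>a' b'. (\<forall>x\<in>J. a' * \<phi>1 x + b' * \<phi>2 x > 0)
            \<longrightarrow> canonical_type_I (\<lambda>x. \<phi> x ^ 2 / W x) S x0
            \<longrightarrow> canonical_type_I (\<lambda>x. (a' * \<phi>1 x + b' * \<phi>2 x) ^ 2 / W x) S x0
            \<longrightarrow> (\<exists>k. k \<noteq> 0 \<and> (\<forall>x\<in>J. a' * \<phi>1 x + b' * \<phi>2 x = k * \<phi> x))"
  proof (intro allI impI)
    fix a' b' :: real
    assume p': "\<forall>x\<in>J. a' * \<phi>1 x + b' * \<phi>2 x > 0"
      and t1: "canonical_type_I (\<lambda>x. \<phi> x ^ 2 / W x) S x0"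
      and t2: "canonical_type_I (\<lambda>x. (a' * \<phi>1 x + b' * \<phi>2 x) ^ 2 / W x) S x0"
    have charB: "improper_conv (\<lambda>t. 1 / ((a' * \<phi>1 t + b' * \<phi>2 t) ^ 2 / W t)) S x0 \<longleftrightarrow> a' \<noteq> 0"
      unfolding W_def
      by (rule char) (use assms p' in \<open>auto simp: I_def J_def\<close>)
    have a0: "a = 0" using t1 charA by (simp add: canonical_type_I_def)
    have a0': "a' = 0" using t2 charB by (simp add: canonical_type_I_def)
    have b0: "b \<noteq> 0" using bnz[OF a0] .
    have b0': "b' \<noteq> 0" using p' SJ a0' by auto
    show "\<exists>k. k \<noteq> 0 \<and> (\<forall>x\<in>J. a' * \<phi>1 x + b' * \<phi>2 x = k * \<phi> x)"
      using b0 b0' a0 a0' by (intro exI[of _ "b' / b"]) (simp add: \<phi>_def)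
  qed
  show ?thesis using c1 c2 c3 c4 by blast
qed

end
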